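(* Let $(\mathcal{G},\underline{a})$ be a compact metric graph (i.e. $\mathcal{E}=\emptyset$) and let $P$ be an orthogonal projector in $\mathcal{K}$, $P^\perp=1-P$. If $\operatorname{Ker}\bigl(P^\perp M(0,\underline{a})P^\perp+P\bigr)=\{0\}$, then there exists a constant $C=C(P,\underline{a})>0$ such that $$\|u'\|_{\mathcal{H}}\ge C\|u\|_{\mathcal{H}}\qquad\text{for all } u\in\mathcal{W}_P=\{\phi\in\mathcal{W}\mid P\underline{\phi}=0\}.$$
   Context: A compact finite metric graph consists of finitely many vertices and a finite set $\mathcal{I}$ of internal edges, each identified with an interval $[0,a_i]$, $a_i>0$; $\underline{a}=\{a_i\}_{i\in\mathcal{I}}$. The Hilbert space is $\mathcal{H}=\bigoplus_{i\in\mathcal I}L^2(0,a_i)$, and $\mathcal{W}=\bigoplus_i\mathcal{W}_i$, where $\mathcal{W}_i$ is the set of absolutely continuous $\psi_i\in L^2(0,a_i)$ with $\psi_i'\in L^2(0,a_i)$; $u'$ denotes the edgewise derivative. Let $\mathcal{K}=\mathcal{K}_{\mathcal{I}}^-\oplus\mathcal{K}_{\mathcal{I}}^+$ with $\mathcal{K}_{\mathcal{I}}^\pm\cong\mathbb{C}^{|\mathcal{I}|}$, and for $\phi\in\mathcal{W}$ let $\underline{\phi}=(\{\phi_i(0)\}_{i\in\mathcal{I}},\{\phi_i(a_i)\}_{i\in\mathcal{I}})\in\mathcal{K}$. With respect to this decomposition $M(0,\underline{a})=\begin{bmatrix}-\frac{1}{\underline{a}}&\frac{1}{\underline{a}}\\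 \frac{1}{\underline{a}}&-\frac{1}{\underline{a}}\end{bmatrix}$, where $\frac1{\underline a}$ is the diagonal matrix with entries $1/a_i$. *)

theory Defs
  imports "HOL-Analysis.Analysis"
begin

definition abs_continuous_on :: "real set \<Rightarrow> (real \<Rightarrow> 'b::real_normed_vector) \<Rightarrow> bool" where
  "abs_continuous_on S f \<longleftrightarrow>
     (\<forall>\<epsilon>>0. \<exists>\<delta>>0. \<forall>(n::nat) (x::nat \<Rightarrow> real) (y::nat \<Rightarrow> real).
        (\<forall>k<n. x k \<le> y k \<and> {x k..y k} \<subseteq> S) \<and>
        (\<forall>k<n. \<forall>l<n. k \<noteq> l \<longrightarrow> y k \<le> x l \<or> y l \<le> x k) \<and>
        (\<Sum>k<n. y k - x k) < \<delta>
        \<longrightarrow> (\<Sum>k<n. norm (f (y k) - f (x k))) < \<epsilon>)"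

definition L2_on :: "real set \<Rightarrow> (real \<Rightarrow> complex) \<Rightarrow> bool" where
  "L2_on S g \<longleftrightarrow> g \<in> borel_measurable (lebesgue_on S) \<and>
                  integrable (lebesgue_on S) (\<lambda>x. (cmod (g x))\<^sup>2)"

text \<open>Edge space W_i: psi absolutely continuous on [0,a], with an a.e. derivative g in L^2(0,a).
  "edge_W a psi g" says psi is in W_i and g is (a representative of) psi'.\<close>
definition edge_W :: "real \<Rightarrow> (real \<Rightarrow> complex) \<Rightarrow> (real \<Rightarrow> complex) \<Rightarrow> bool" where
  "edge_W a psi g \<longleftrightarrow> abs_continuous_on {0..a} psi \<and> L2_on {0..a} g \<and>
     (AE x in lebesgue_on {0..a}. (psi has_vector_derivative g x) (at x within {0..a}))"

definition H_norm :: "('i::finite \<Rightarrow> real) \<Rightarrow> ('i \<Rightarrow> real \<Rightarrow> complex) \<Rightarrow> real" where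
  "H_norm a u = sqrt (\<Sum>i\<in>UNIV. integral\<^sup>L (lebesgue_on {0..a i}) (\<lambda>x. (cmod (u i x))\<^sup>2))"

text \<open>Boundary values: K = K^- (+) K^+, Inl i = value at 0, Inr i = value at a_i.\<close>
definition bdry :: "('i::finite \<Rightarrow> real) \<Rightarrow> ('i \<Rightarrow> real \<Rightarrow> complex) \<Rightarrow> complex ^ ('i + 'i)" where
  "bdry a u = (\<chi> k. case k of Inl i \<Rightarrow> u i 0 | Inr i \<Rightarrow> u i (a i))"

definition M0 :: "('i::finite \<Rightarrow> real) \<Rightarrow> complex ^ ('i + 'i) ^ ('i + 'i)" where
  "M0 a = (\<chi> k l. case (k, l) of
      (Inl i, Inl j) \<Rightarrow> (if i = j then - complex_of_real (1 / a i) else 0)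
    | (Inl i, Inr j) \<Rightarrow> (if i = j then complex_of_real (1 / a i) else 0)
    | (Inr i, Inl j) \<Rightarrow> (if i = j then complex_of_real (1 / a i) else 0)
    | (Inr i, Inr j) \<Rightarrow> (if i = j then - complex_of_real (1 / a i) else 0))"

definition orth_projector :: "complex ^ 'n ^ 'n \<Rightarrow> bool" where
  "orth_projector P \<longleftrightarrow> P ** P = P \<and> (\<forall>k l. P $ k $ l = cnj (P $ l $ k))"

end

theory Submission
  imports Defs
begin

lemma ac_cont:
  assumes ac: "abs_continuous_on {0..a} f"
  shows "continuous_on {0..a} f"
  unfolding continuous_on_iff
proof (intro ballI allI impI)
  fix x e assume x: "x \<in> {0..a}" and e: "(0::real) < e"
  obtain d where d: "d > 0" and H: "\<And>n (xs::nat\<Rightarrow>real) ys.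
        (\<forall>k<n. xs k \<le> ys k \<and> {xs k..ys k} \<subseteq> {0..a}) \<and>
        (\<forall>k<n. \<forall>l<n. k \<noteq> l \<longrightarrow> ys k \<le> xs l \<or> ys l \<le> xs k) \<and>
        (\<Sum>k<n. ys k - xs k) < d
        \<Longrightarrow> (\<Sum>k<n. norm (f (ys k) - f (xs k))) < e"
    using ac e unfolding abs_continuous_on_def by blast
  show "\<exists>d>0. \<forall>x'\<in>{0..a}. dist x' x < d \<longrightarrow> dist (f x') (f x) < e"
  proof (intro exI[of _ d] conjI ballI impI d)
    fix y assume y: "y \<in> {0..a}" "dist y x < d"
    have "norm (f (max x y) - f (min x y)) < e"
      using H[of 1 "\<lambda>_. min x y" "\<lambda>_. max x y"] x y by (auto simp: dist_real_def max_def min_def abs_if split: if_splits)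
    then show "dist (f y) (f x) < e"
      by (cases "x \<le> y") (auto simp: dist_norm norm_minus_commute max_def min_def)
  qed
qed

lemma open_conn_interval:
  fixes C :: "real set"
  assumes op: "open C" and cn: "connected C" and ne: "C \<noteq> {}" and ba: "bdd_above C" and bb: "bdd_below C"
  shows "C = {Inf C<..<Sup C}"
proof
  show "C \<subseteq> {Inf C<..<Sup C}"
  proof
    fix x assume x: "x \<in> C"
    obtain e where e: "e > 0" "ball x e \<subseteq> C" using op x openE by blast
    have "x - e/2 \<in> C" "x + e/2 \<in> C" using e by (auto simp: dist_real_def subset_iff)
    then have "Inf C \<le> x - e/2" "x + e/2 \<le> Sup C"
      using cInf_lower[OF _ bb] cSup_upper[OF _ ba] by auto
    then show "x \<in> {Inf C<..<Sup C}" using e by auto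
  qed
next
  show "{Inf C<..<Sup C} \<subseteq> C"
  proof
    fix x assume x: "x \<in> {Inf C<..<Sup C}"
    obtain y where y: "y \<in> C" "y < x" using cInf_lessD[OF ne] x by auto
    obtain z where z: "z \<in> C" "x < z" using less_cSupD[OF ne] x by auto
    have "is_interval C" using cn is_interval_connected_1 by blast
    then show "x \<in> C" using y z unfolding is_interval_1 by (meson less_imp_le)
  qed
qed

lemma disj_ivl_order:
  fixes l r l' r' :: real
  assumes "{l<..<r} \<inter> {l'<..<r'} = {}" "l < r" "l' < r'"
  shows "r \<le> l' \<or> r' \<le> l"
proof (rule ccontr)
  assume "\<not> ?thesis"
  then have "(max l l' + min r r')/2 \<in> {l<..<r} \<inter> {l'<..<r'}" using assms(2,3)
    by (auto simp: max_def min_def)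
  then show False using assms(1) by blast
qed

lemma ac_negligible_image:
  fixes \<phi> :: "real \<Rightarrow> real"
  assumes ac: "abs_continuous_on {0..a} \<phi>" and N: "negligible N" and Na: "N \<subseteq> {0<..<a}"
  shows "negligible (\<phi> ` N)"
  unfolding negligible_outer_le
proof (intro allI impI)
  fix e :: real assume e: "e > 0"
  have cont: "continuous_on {0..a} \<phi>" by (rule ac_cont[OF ac])
  obtain d where d: "d > 0" and H: "\<And>n (xs::nat\<Rightarrow>real) ys.
        (\<forall>k<n. xs k \<le> ys k \<and> {xs k..ys k} \<subseteq> {0..a}) \<and>
        (\<forall>k<n. \<forall>l<n. k \<noteq> l \<longrightarrow> ys k \<le> xs l \<or> ys l \<le> xs k) \<and>
        (\<Sum>k<n. ys k - xs k) < d
        \<Longrightarrow> (\<Sum>k<n. norm (\<phi> (ys k) - \<phi> (xs k))) < e"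
    using ac e unfolding abs_continuous_on_def by blast
  have Nsets: "N \<in> sets lebesgue" using N negligible_imp_sets by blast
  obtain U where U: "open U" "N \<subseteq> U" "U - N \<in> lmeasurable" "emeasure lebesgue (U - N) < ennreal d"
    using sets_lebesgue_outer_open[OF Nsets d] by blast
  define V where "V = U \<inter> {0<..<a}"
  have Vopen: "open V" using U(1) by (simp add: V_def open_Int)
  have NV: "N \<subseteq> V" using U(2) Na by (auto simp: V_def)
  have Vsub: "V \<subseteq> {0<..<a}" by (auto simp: V_def)
  have Vmeas: "V \<in> lmeasurable"
    by (rule lmeasurable_open[OF _ Vopen]) (rule bounded_subset[OF compact_imp_bounded[OF compact_Icc[of 0 a]]], use Vsub in auto)
  have mUN: "measure lebesgue (U - N) < d"
    using U(3,4) by (simp add: emeasure_eq_measure2 ennreal_less_iff)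
  have mN: "measure lebesgue N = 0" using N negligible_imp_measure0 by blast
  have UNm: "(U - N) \<union> N \<in> lmeasurable"
    using U(3) negligible_imp_measurable[OF N] by (rule fmeasurable.Un)
  have "measure lebesgue V \<le> measure lebesgue ((U - N) \<union> N)"
    by (rule measure_mono_fmeasurable[OF _ _ UNm]) (use Vmeas in \<open>auto simp: V_def\<close>)
  also have "\<dots> \<le> measure lebesgue (U - N) + measure lebesgue N"
    using U(3) Nsets by (intro measure_Un_le) auto
  finally have mV: "measure lebesgue V < d" using mUN mN by linarith
  define \<C> where "\<C> = components V"
  have Copen: "open C" if "C \<in> \<C>" for C using that Vopen open_components \<C>_def by blast
  have Cne: "C \<noteq> {}" if "C \<in> \<C>" for C using that in_components_nonempty \<C>_def by blast
  have Csub: "C \<subseteq> {0<..<a}" if "C \<in> \<C>" for C using that in_components_subset Vsub \<C>_def by blast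
  have Cba: "bdd_above C" "bdd_below C" if "C \<in> \<C>" for C
    using Csub[OF that] by (meson bdd_above_Ioo bdd_below_Ioo bdd_above_mono bdd_below_mono)+
  have Civl: "C = {Inf C<..<Sup C}" if "C \<in> \<C>" for C
    using that Copen Cne Cba in_components_connected \<C>_def open_conn_interval by blast
  have Clt: "Inf C < Sup C" if "C \<in> \<C>" for C
    using Civl[OF that] Cne[OF that] by (metis greaterThanLessThan_empty_iff not_less)
  have Cbnd: "0 \<le> Inf C" "Sup C \<le> a" if "C \<in> \<C>" for C
  proof -
    show "0 \<le> Inf C" using Csub[OF that] Cne[OF that] by (intro cInf_greatest) auto
    show "Sup C \<le> a" using Csub[OF that] Cne[OF that] by (intro cSup_least) auto
  qed
  have Cdisj: "C \<inter> C' = {}" if "C \<in> \<C>" "C' \<in> \<C>" "C \<noteq> C'" for C C'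
    using that pairwise_disjoint_components unfolding \<C>_def pairwise_def by blast
  have Cord: "Sup C \<le> Inf C' \<or> Sup C' \<le> Inf C" if "C \<in> \<C>" "C' \<in> \<C>" "C \<noteq> C'" for C C'
    using disj_ivl_order[of "Inf C" "Sup C" "Inf C'" "Sup C'"] Cdisj[OF that] Civl that Clt by metis
  have Cmeas: "measure lebesgue C = Sup C - Inf C" if "C \<in> \<C>" for C
  proof -
    have "measure lebesgue {Inf C<..<Sup C} = Sup C - Inf C" using Clt[OF that] by simp
    then show ?thesis using Civl[OF that] by metis
  qed
  have Clm: "C \<in> lmeasurable" if "C \<in> \<C>" for C
  proof -
    have "{Inf C<..<Sup C} \<in> lmeasurable" by simp
    then show ?thesis using Civl[OF that] by metis
  qed
  have Cunion: "\<Union>\<C> = V" by (simp add: \<C>_def)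
  have Ccount: "countable \<C>"
    using Copen Cdisj by (intro countable_disjoint_open_subsets) (auto simp: pairwise_def disjnt_def)
  have "\<forall>C\<in>\<C>. \<exists>s\<in>{Inf C..Sup C}. \<exists>t\<in>{Inf C..Sup C}. \<forall>y\<in>{Inf C..Sup C}. \<phi> s \<le> \<phi> y \<and> \<phi> y \<le> \<phi> t"
  proof
    fix C assume C: "C \<in> \<C>"
    have cC: "continuous_on {Inf C..Sup C} \<phi>"
      by (rule continuous_on_subset[OF cont]) (use Cbnd[OF C] in auto)
    obtain s where s: "s \<in> {Inf C..Sup C}" "\<forall>y\<in>{Inf C..Sup C}. \<phi> s \<le> \<phi> y"
      using continuous_attains_inf[OF compact_Icc _ cC] Clt[OF C] by auto
    obtain t where t: "t \<in> {Inf C..Sup C}" "\<forall>y\<in>{Inf C..Sup C}. \<phi> y \<le> \<phi> t"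
      using continuous_attains_sup[OF compact_Icc _ cC] Clt[OF C] by auto
    show "\<exists>s\<in>{Inf C..Sup C}. \<exists>t\<in>{Inf C..Sup C}. \<forall>y\<in>{Inf C..Sup C}. \<phi> s \<le> \<phi> y \<and> \<phi> y \<le> \<phi> t"
      using s t by blast
  qed
  then obtain s t where st: "\<And>C. C \<in> \<C> \<Longrightarrow> s C \<in> {Inf C..Sup C} \<and> t C \<in> {Inf C..Sup C} \<and>
      (\<forall>y\<in>{Inf C..Sup C}. \<phi> (s C) \<le> \<phi> y \<and> \<phi> y \<le> \<phi> (t C))"
    by metis
  define J where "J C = {\<phi> (s C)..\<phi> (t C)}" for C
  have imgJ: "\<phi> ` C \<subseteq> J C" if "C \<in> \<C>" for C
  proof -
    have "C \<subseteq> {Inf C..Sup C}" using Civl[OF that] by (metis greaterThanLessThan_subseteq_atLeastAtMost_iff order_refl)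
    then show ?thesis using st[OF that] by (auto simp: J_def)
  qed
  have stle: "\<phi> (s C) \<le> \<phi> (t C)" if "C \<in> \<C>" for C using st[OF that] by blast
  have finbound: "(\<Sum>C\<in>F. \<phi> (t C) - \<phi> (s C)) < e" if F: "finite F" "F \<subseteq> \<C>" for F
  proof -
    define m where "m = card F"
    define g where "g = from_nat_into F"
    have bij: "bij_betw g {..<m} F" unfolding g_def m_def by (rule bij_betw_from_nat_into_finite[OF F(1)])
    have gF: "g k \<in> \<C>" if "k < m" for k using bij F(2) that by (auto simp: bij_betw_def)
    define xs where "xs k = min (s (g k)) (t (g k))" for k
    define ys where "ys k = max (s (g k)) (t (g k))" for k
    have xsys: "Inf (g k) \<le> xs k" "ys k \<le> Sup (g k)" "xs k \<le> ys k" if "k < m" for k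
      using st[OF gF[OF that]] by (auto simp: xs_def ys_def)
    have c1: "\<forall>k<m. xs k \<le> ys k \<and> {xs k..ys k} \<subseteq> {0..a}"
    proof (intro allI impI conjI)
      fix k assume k: "k < m"
      show "xs k \<le> ys k" using xsys[OF k] by simp
      show "{xs k..ys k} \<subseteq> {0..a}" using xsys[OF k] Cbnd[OF gF[OF k]] by auto
    qed
    have c2: "\<forall>k<m. \<forall>l<m. k \<noteq> l \<longrightarrow> ys k \<le> xs l \<or> ys l \<le> xs k"
    proof (intro allI impI)
      fix k l assume kl: "k < m" "l < m" "k \<noteq> l"
      have "g k \<noteq> g l" using bij kl by (auto simp: bij_betw_def inj_on_def)
      then have "Sup (g k) \<le> Inf (g l) \<or> Sup (g l) \<le> Inf (g k)" using Cord gF kl by blast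
      then show "ys k \<le> xs l \<or> ys l \<le> xs k" using xsys[OF kl(1)] xsys[OF kl(2)] by linarith
    qed
    have "(\<Sum>k<m. ys k - xs k) \<le> (\<Sum>k<m. measure lebesgue (g k))"
      using xsys Cmeas gF by (intro sum_mono) fastforce
    also have "\<dots> = (\<Sum>C\<in>F. measure lebesgue C)"
      by (rule sum.reindex_bij_betw[OF bij])
    also have "\<dots> = measure lebesgue (\<Union>F)"
    proof (rule measure_Union'[symmetric, OF F(1)])
      show "C \<in> lmeasurable" if "C \<in> F" for C
        using that F(2) Clm by blast
      show "pairwise disjnt F" using Cdisj F(2) by (auto simp: pairwise_def disjnt_def)
    qed
    also have "\<dots> \<le> measure lebesgue V"
    proof (rule measure_mono_fmeasurable[OF _ _ Vmeas])
      show "\<Union>F \<subseteq> V" using F(2) Cunion by blast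
      show "\<Union>F \<in> sets lebesgue" using F Clm
        by (intro sets.finite_Union) (auto intro: fmeasurableD)
    qed
    finally have "(\<Sum>k<m. ys k - xs k) < d" using mV by linarith
    then have "(\<Sum>k<m. norm (\<phi> (ys k) - \<phi> (xs k))) < e" using H c1 c2 by blast
    moreover have "(\<Sum>k<m. norm (\<phi> (ys k) - \<phi> (xs k))) = (\<Sum>k<m. \<phi> (t (g k)) - \<phi> (s (g k)))"
      by (intro sum.cong refl) (use stle gF in \<open>auto simp: xs_def ys_def max_def min_def\<close>)
    moreover have "(\<Sum>k<m. \<phi> (t (g k)) - \<phi> (s (g k))) = (\<Sum>C\<in>F. \<phi> (t C) - \<phi> (s C))"
      by (rule sum.reindex_bij_betw[OF bij])
    ultimately show ?thesis by simp
  qed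
  show "\<exists>T. \<phi> ` N \<subseteq> T \<and> T \<in> lmeasurable \<and> measure lebesgue T \<le> e"
  proof (cases "\<C> = {}")
    case True
    then have "N = {}" using Cunion NV by auto
    then show ?thesis using e by (intro exI[of _ "{}"]) auto
  next
    case False
    define f where "f = from_nat_into \<C>"
    have rf: "range f = \<C>" using False Ccount by (simp add: f_def)
    define D where "D i = J (f i)" for i
    have Dm: "D i \<in> lmeasurable" for i by (simp add: D_def J_def)
    have Db: "measure lebesgue (\<Union>i\<le>n. D i) \<le> e" for n
    proof -
      have "(\<Union>i\<le>n. D i) = (\<Union>C\<in>f ` {..n}. J C)" by (auto simp: D_def)
      also have "measure lebesgue \<dots> \<le> (\<Sum>C\<in>f ` {..n}. measure lebesgue (J C))"
        by (rule measure_UNION_le) (auto simp: J_def)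
      also have "\<dots> = (\<Sum>C\<in>f ` {..n}. \<phi> (t C) - \<phi> (s C))"
        using rf stle by (intro sum.cong refl) (auto simp: J_def)
      also have "\<dots> < e" using rf by (intro finbound) auto
      finally show ?thesis by simp
    qed
    have "\<phi> ` N \<subseteq> (\<Union>i. D i)"
    proof
      fix y assume "y \<in> \<phi> ` N"
      then obtain x where x: "x \<in> N" "y = \<phi> x" by blast
      then obtain C where C: "C \<in> \<C>" "x \<in> C" using NV Cunion by blast
      then obtain i where "f i = C" using rf by blast
      then show "y \<in> (\<Union>i. D i)" using imgJ[OF C(1)] C x by (auto simp: D_def)
    qed
    then show ?thesis using fmeasurable_countable_Union[OF Dm Db] measure_countable_Union_le[OF Dm Db] by blast
  qed
qed

lemma lmeas_has_int:
  fixes S :: "'a::euclidean_space set"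
  shows "S \<in> lmeasurable \<and> m = measure lebesgue S \<longleftrightarrow> ((\<lambda>x. 1::real) has_integral m) S"
proof -
  have "indicat_real S = (\<lambda>x. if x \<in> S then 1 else 0)" by (auto simp: indicator_def)
  then show ?thesis using lmeasurable_iff_indicator_has_integral[of S m] has_integral_restrict_UNIV[of S "\<lambda>x. 1::real" m]
    by simp
qed

lemma measure_image_deriv_real:
  fixes f f' :: "real \<Rightarrow> real"
  assumes S: "S \<in> sets lebesgue"
    and deriv: "\<And>x. x \<in> S \<Longrightarrow> (f has_real_derivative f' x) (at x within S)"
    and int: "(\<lambda>x. \<bar>f' x\<bar>) integrable_on S"
  shows "f ` S \<in> lmeasurable \<and> measure lebesgue (f ` S) \<le> integral S (\<lambda>x. \<bar>f' x\<bar>)"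
proof -
  let ?lift = "vec :: real \<Rightarrow> real^1"
  let ?drop = "(\<lambda>x::real^1. x $ 1)"
  define F where "F = (\<lambda>v::real^1. ?lift (f (v $ 1)))"
  define F' where "F' = (\<lambda>v::real^1. (\<lambda>h::real^1. f' (v $ 1) *\<^sub>R h))"
  have S': "?lift ` S \<in> sets lebesgue"
    by (auto intro: differentiable_image_in_sets_lebesgue [OF S] differentiable_vec)
  have "((\<lambda>x. vec (f (x $ 1))) has_derivative (*\<^sub>R) (f' z)) (at (vec z) within ?lift ` S)"
    if "z \<in> S" for z
    using deriv [OF that] unfolding has_real_derivative_iff_has_vector_derivative
    by (simp add: has_vector_derivative_def has_derivative_vector_1)
  then have der': "\<And>x. x \<in> ?lift ` S \<Longrightarrow> (F has_derivative F' x) (at x within ?lift ` S)"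
    by (auto simp: F_def F'_def)
  have det: "\<bar>det (matrix (F' x))\<bar> = \<bar>f' (x $ 1)\<bar>" for x
    by (simp add: F'_def det_1 matrix_def axis_def)
  have dS: "?drop ` ?lift ` S = S" by (force simp: image_image)
  have int': "(\<lambda>x. \<bar>det (matrix (F' x))\<bar>) integrable_on ?lift ` S"
  proof -
    have "((\<lambda>x. \<bar>f' x\<bar>) has_integral integral S (\<lambda>x. \<bar>f' x\<bar>)) S" using int by blast
    then have "(((\<lambda>v::real^1. \<bar>f' (v $ 1)\<bar>) \<circ> vec) has_integral integral S (\<lambda>x. \<bar>f' x\<bar>)) (?drop ` ?lift ` S)"
      by (simp add: dS o_def)
    then have "((\<lambda>v::real^1. \<bar>f' (v $ 1)\<bar>) has_integral integral S (\<lambda>x. \<bar>f' x\<bar>)) (?lift ` S)"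
      by (rule has_integral_vec1_D)
    then show ?thesis unfolding det by blast
  qed
  have intEq: "integral (?lift ` S) (\<lambda>x. \<bar>det (matrix (F' x))\<bar>) = integral S (\<lambda>x. \<bar>f' x\<bar>)"
    unfolding det integral_vec1_eq[of "?lift ` S"] dS by (simp add: o_def)
  have T: "F ` ?lift ` S \<in> lmeasurable" and mT: "measure lebesgue (F ` ?lift ` S) \<le> integral S (\<lambda>x. \<bar>f' x\<bar>)"
    using measurable_differentiable_image[OF S' der' int'] measure_differentiable_image[OF S' der' int'] intEq
    by auto
  have "((\<lambda>x. 1::real) has_integral measure lebesgue (F ` ?lift ` S)) (F ` ?lift ` S)"
    using T lmeas_has_int by blast
  then have "(((\<lambda>x::real^1. 1::real) \<circ> vec) has_integral measure lebesgue (F ` ?lift ` S)) (?drop ` F ` ?lift ` S)"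
    by (rule has_integral_vec1_I)
  moreover have "?drop ` F ` ?lift ` S = f ` S" by (force simp: F_def image_image)
  ultimately have "((\<lambda>x. 1::real) has_integral measure lebesgue (F ` ?lift ` S)) (f ` S)" by (simp add: o_def)
  then have "f ` S \<in> lmeasurable \<and> measure lebesgue (F ` ?lift ` S) = measure lebesgue (f ` S)"
    using lmeas_has_int by blast
  then show ?thesis using mT by simp
qed

lemma integrable_on_sub_lebesgue_on:
  fixes g :: "real \<Rightarrow> real"
  assumes int: "integrable (lebesgue_on {0..a}) g" and S: "S \<in> sets lebesgue" "S \<subseteq> {0..a}"
  shows "g integrable_on S" "g integrable_on {0..a}"
proof -
  have "set_integrable lebesgue {0..a} g"
    using int unfolding set_integrable_def by (simp add: integrable_restrict_space)
  then have "set_integrable lebesgue S g" using S by (rule set_integrable_subset)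
  then show "g integrable_on S" by (rule set_lebesgue_integral_eq_integral)
  show "g integrable_on {0..a}" using int by (rule integrable_on_lebesgue_on) simp
qed

lemma ac_ftc_bound_real:
  fixes \<phi> \<psi> :: "real \<Rightarrow> real"
  assumes ac: "abs_continuous_on {0..a} \<phi>"
    and ae: "AE x in lebesgue_on {0..a}. (\<phi> has_real_derivative \<psi> x) (at x within {0..a})"
    and int: "integrable (lebesgue_on {0..a}) \<psi>"
    and x: "x \<in> {0..a}"
  shows "\<bar>\<phi> x - \<phi> 0\<bar> \<le> integral\<^sup>L (lebesgue_on {0..a}) (\<lambda>t. \<bar>\<psi> t\<bar>)"
proof -
  have cont: "continuous_on {0..a} \<phi>" by (rule ac_cont[OF ac])
  obtain N where N1: "\<And>t. t \<in> space (lebesgue_on {0..a}) - N \<Longrightarrow> (\<phi> has_real_derivative \<psi> t) (at t within {0..a})"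
    and N2: "N \<in> null_sets (lebesgue_on {0..a})"
    using AE_E3[OF ae] by blast
  have Nn: "N \<in> null_sets lebesgue" "N \<subseteq> {0..a}" using N2 null_sets_restrict_space[of "{0..a}" lebesgue N] by auto
  define S where "S = {0<..<a} - N"
  have Ssets: "S \<in> sets lebesgue" using Nn by (auto simp: S_def)
  have Ssub: "S \<subseteq> {0..a}" by (auto simp: S_def)
  have der: "(\<phi> has_real_derivative \<psi> t) (at t within S)" if "t \<in> S" for t
    using N1[of t] that Ssub by (auto simp: S_def intro: has_field_derivative_subset)
  have intabs: "integrable (lebesgue_on {0..a}) (\<lambda>t. \<bar>\<psi> t\<bar>)" using int by (rule integrable_abs)
  have intS: "(\<lambda>t. \<bar>\<psi> t\<bar>) integrable_on S" and intA: "(\<lambda>t. \<bar>\<psi> t\<bar>) integrable_on {0..a}"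
    using integrable_on_sub_lebesgue_on[OF intabs Ssets Ssub] by auto
  have img: "\<phi> ` S \<in> lmeasurable" "measure lebesgue (\<phi> ` S) \<le> integral S (\<lambda>t. \<bar>\<psi> t\<bar>)"
    using measure_image_deriv_real[OF Ssets der intS] by auto
  have negN: "negligible (\<phi> ` ({0<..<a} \<inter> N))"
  proof (rule ac_negligible_image[OF ac])
    have "negligible N" using Nn(1) negligible_iff_null_sets by blast
    then show "negligible ({0<..<a} \<inter> N)" by (rule negligible_subset) auto
  qed auto
  define R where "R = \<phi> ` S \<union> (\<phi> ` ({0<..<a} \<inter> N) \<union> {\<phi> 0, \<phi> a})"
  have negR: "negligible (\<phi> ` ({0<..<a} \<inter> N) \<union> {\<phi> 0, \<phi> a})"
    using negN by (auto intro: negligible_Un)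
  have Rm: "R \<in> lmeasurable" unfolding R_def
    using img(1) negligible_imp_measurable[OF negR] by (rule fmeasurable.Un)
  have mR: "measure lebesgue R \<le> measure lebesgue (\<phi> ` S) + measure lebesgue (\<phi> ` ({0<..<a} \<inter> N) \<union> {\<phi> 0, \<phi> a})"
    unfolding R_def using img(1) negligible_imp_measurable[OF negR] by (intro measure_Un_le) auto
  have "measure lebesgue (\<phi> ` ({0<..<a} \<inter> N) \<union> {\<phi> 0, \<phi> a}) = 0"
    using negR negligible_imp_measure0 by blast
  with mR have mR': "measure lebesgue R \<le> measure lebesgue (\<phi> ` S)" by simp
  have "{0..a} \<subseteq> S \<union> ({0<..<a} \<inter> N) \<union> {0, a}" by (auto simp: S_def)
  then have phiA: "\<phi> ` {0..a} \<subseteq> R" unfolding R_def by blast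
  have seg: "closed_segment (\<phi> 0) (\<phi> x) \<subseteq> \<phi> ` {0..a}"
  proof -
    have "connected (\<phi> ` {0..a})" by (rule connected_continuous_image[OF cont]) simp
    moreover have "\<phi> 0 \<in> \<phi> ` {0..a}" "\<phi> x \<in> \<phi> ` {0..a}" using x by auto
    ultimately have iv: "is_interval (\<phi> ` {0..a})" "\<phi> 0 \<in> \<phi> ` {0..a}" "\<phi> x \<in> \<phi> ` {0..a}"
      using is_interval_connected_1 by blast+
    show ?thesis
    proof
      fix y assume "y \<in> closed_segment (\<phi> 0) (\<phi> x)"
      then have "min (\<phi> 0) (\<phi> x) \<le> y" "y \<le> max (\<phi> 0) (\<phi> x)"
        by (auto simp: closed_segment_eq_real_ivl split: if_splits)
      then show "y \<in> \<phi> ` {0..a}" using iv unfolding is_interval_1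
        by (cases "\<phi> 0 \<le> \<phi> x") (auto simp: min_def max_def)
    qed
  qed
  have "\<bar>\<phi> x - \<phi> 0\<bar> = measure lebesgue (closed_segment (\<phi> 0) (\<phi> x))"
    by (simp add: closed_segment_eq_real_ivl)
  also have "\<dots> \<le> measure lebesgue R"
    using seg phiA by (intro measure_mono_fmeasurable[OF _ _ Rm]) auto
  also have "\<dots> \<le> integral S (\<lambda>t. \<bar>\<psi> t\<bar>)" using mR' img(2) by linarith
  also have "\<dots> \<le> integral {0..a} (\<lambda>t. \<bar>\<psi> t\<bar>)"
    using Ssub intS intA by (intro integral_subset_le) auto
  also have "\<dots> = integral\<^sup>L (lebesgue_on {0..a}) (\<lambda>t. \<bar>\<psi> t\<bar>)"
    using has_integral_integral_lebesgue_on[OF intabs] by (simp add: integral_unique)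
  finally show ?thesis .
qed

lemma ac_Re_mult:
  assumes ac: "abs_continuous_on S u" and c: "cmod c \<le> 1"
  shows "abs_continuous_on S (\<lambda>t. Re (c * u t))"
  unfolding abs_continuous_on_def
proof (intro allI impI)
  fix e :: real assume e: "e > 0"
  then obtain d where d: "d > 0" and H: "\<And>(n::nat) (xs::nat\<Rightarrow>real) ys.
        (\<forall>k<n. xs k \<le> ys k \<and> {xs k..ys k} \<subseteq> S) \<and>
        (\<forall>k<n. \<forall>l<n. k \<noteq> l \<longrightarrow> ys k \<le> xs l \<or> ys l \<le> xs k) \<and>
        (\<Sum>k<n. ys k - xs k) < d
        \<Longrightarrow> (\<Sum>k<n. norm (u (ys k) - u (xs k))) < e"
    using ac unfolding abs_continuous_on_def by blast
  have le: "norm (Re (c * u y) - Re (c * u x)) \<le> norm (u y - u x)" for x y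
  proof -
    have "norm (Re (c * u y) - Re (c * u x)) = \<bar>Re (c * (u y - u x))\<bar>" by (simp add: algebra_simps)
    also have "\<dots> \<le> cmod (c * (u y - u x))" by (rule abs_Re_le_cmod)
    also have "\<dots> \<le> cmod (u y - u x)" using c by (simp add: norm_mult mult_left_le_one_le)
    finally show ?thesis by simp
  qed
  show "\<exists>d>0. \<forall>(n::nat) (xs::nat\<Rightarrow>real) ys. (\<forall>k<n. xs k \<le> ys k \<and> {xs k..ys k} \<subseteq> S) \<and>
        (\<forall>k<n. \<forall>l<n. k \<noteq> l \<longrightarrow> ys k \<le> xs l \<or> ys l \<le> xs k) \<and>
        (\<Sum>k<n. ys k - xs k) < d \<longrightarrow>
        (\<Sum>k<n. norm (Re (c * u (ys k)) - Re (c * u (xs k)))) < e"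
  proof (intro exI[of _ d] conjI d allI impI)
    fix n :: nat and xs ys :: "nat \<Rightarrow> real" assume h: "(\<forall>k<n. xs k \<le> ys k \<and> {xs k..ys k} \<subseteq> S) \<and>
        (\<forall>k<n. \<forall>l<n. k \<noteq> l \<longrightarrow> ys k \<le> xs l \<or> ys l \<le> xs k) \<and>
        (\<Sum>k<n. ys k - xs k) < d"
    have "(\<Sum>k<n. norm (Re (c * u (ys k)) - Re (c * u (xs k)))) \<le> (\<Sum>k<n. norm (u (ys k) - u (xs k)))"
      by (intro sum_mono le)
    also have "\<dots> < e" using H[of n xs ys] h by blast
    finally show "(\<Sum>k<n. norm (Re (c * u (ys k)) - Re (c * u (xs k)))) < e" .
  qed
qed

lemma L2_integrable:
  assumes L: "L2_on {0..a} g"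
  shows "integrable (lebesgue_on {0..a}) (\<lambda>t. cmod (g t))" "integrable (lebesgue_on {0..a}) g"
    "integrable (lebesgue_on {0..a}) (\<lambda>t. (cmod (g t))\<^sup>2)"
proof -
  have gm: "g \<in> borel_measurable (lebesgue_on {0..a})" and sq: "integrable (lebesgue_on {0..a}) (\<lambda>x. (cmod (g x))\<^sup>2)"
    using L unfolding L2_on_def by auto
  show "integrable (lebesgue_on {0..a}) (\<lambda>t. (cmod (g t))\<^sup>2)" by (rule sq)
  interpret finite_measure "lebesgue_on {0..a}" by (rule finite_measure_lebesgue_on) simp
  have b: "integrable (lebesgue_on {0..a}) (\<lambda>t. 1 + (cmod (g t))\<^sup>2)"
    using sq by (intro Bochner_Integration.integrable_add) auto
  have pw: "norm (g t) \<le> norm (1 + (cmod (g t))\<^sup>2)" for t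
  proof -
    have "0 \<le> (cmod (g t) - 1)\<^sup>2" by simp
    then have "2 * cmod (g t) \<le> (cmod (g t))\<^sup>2 + 1" by (simp add: power2_diff)
    then have "cmod (g t) \<le> 1 + (cmod (g t))\<^sup>2" using norm_ge_zero[of "g t"] by linarith
    then show ?thesis by simp
  qed
  show "integrable (lebesgue_on {0..a}) g"
    using b gm by (rule Bochner_Integration.integrable_bound) (use pw in auto)
  then show "integrable (lebesgue_on {0..a}) (\<lambda>t. cmod (g t))" by (rule integrable_norm)
qed

lemma edge_bound:
  assumes W: "edge_W a u g" and x: "x \<in> {0..a}"
  shows "cmod (u x - u 0) \<le> integral\<^sup>L (lebesgue_on {0..a}) (\<lambda>t. cmod (g t))"
proof -
  have ac: "abs_continuous_on {0..a} u" and L: "L2_on {0..a} g"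
    and ae: "AE x in lebesgue_on {0..a}. (u has_vector_derivative g x) (at x within {0..a})"
    using W unfolding edge_W_def by auto
  define z where "z = u x - u 0"
  define c where "c = (if z = 0 then 1 else cnj z / cmod z)"
  have c1: "cmod c \<le> 1" by (simp add: c_def norm_divide)
  have cz: "Re (c * z) = cmod z"
  proof (cases "z = 0")
    case False
    have "Re (cnj z * z) = (cmod z)\<^sup>2" by (simp add: cmod_power2 flip: power2_eq_square)
    then show ?thesis using False by (simp add: c_def power2_eq_square field_simps)
  qed (simp add: c_def)
  define \<phi> where "\<phi> t = Re (c * u t)" for t
  define \<psi> where "\<psi> t = Re (c * g t)" for t
  have acphi: "abs_continuous_on {0..a} \<phi>" unfolding \<phi>_def by (rule ac_Re_mult[OF ac c1])
  have aephi: "AE t in lebesgue_on {0..a}. (\<phi> has_real_derivative \<psi> t) (at t within {0..a})"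
    using ae
  proof (rule AE_mp, intro AE_I2 impI)
    fix t assume "(u has_vector_derivative g t) (at t within {0..a})"
    then have "((\<lambda>t. c * u t) has_vector_derivative c * g t) (at t within {0..a})"
      by (rule has_vector_derivative_mult_right)
    then have "((\<lambda>t. Re (c * u t)) has_vector_derivative Re (c * g t)) (at t within {0..a})"
      by (rule bounded_linear.has_vector_derivative[OF bounded_linear_Re])
    then show "(\<phi> has_real_derivative \<psi> t) (at t within {0..a})"
      unfolding \<phi>_def \<psi>_def has_real_derivative_iff_has_vector_derivative .
  qed
  have gi: "integrable (lebesgue_on {0..a}) g" and gni: "integrable (lebesgue_on {0..a}) (\<lambda>t. cmod (g t))"
    using L2_integrable[OF L] by auto
  have psii: "integrable (lebesgue_on {0..a}) \<psi>"
    unfolding \<psi>_def using gi by (intro integrable_Re integrable_mult_right)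
  have "cmod (u x - u 0) = \<phi> x - \<phi> 0" using cz by (simp add: \<phi>_def z_def algebra_simps)
  also have "\<dots> \<le> \<bar>\<phi> x - \<phi> 0\<bar>" by simp
  also have "\<dots> \<le> integral\<^sup>L (lebesgue_on {0..a}) (\<lambda>t. \<bar>\<psi> t\<bar>)"
    by (rule ac_ftc_bound_real[OF acphi aephi psii x])
  also have "\<dots> \<le> integral\<^sup>L (lebesgue_on {0..a}) (\<lambda>t. cmod (g t))"
  proof (rule integral_mono[OF integrable_abs[OF psii] gni])
    fix t
    have "\<bar>\<psi> t\<bar> \<le> cmod (c * g t)" unfolding \<psi>_def by (rule abs_Re_le_cmod)
    also have "\<dots> \<le> cmod (g t)" using c1 by (simp add: norm_mult mult_left_le_one_le)
    finally show "\<bar>\<psi> t\<bar> \<le> cmod (g t)" .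
  qed
  finally show ?thesis .
qed

lemma sum_UNIV_Plus:
  "sum f (UNIV :: ('a::finite + 'b::finite) set) = sum (\<lambda>i. f (Inl i)) UNIV + sum (\<lambda>i. f (Inr i)) UNIV"
  using sum.Plus[of "UNIV :: 'a set" "UNIV :: 'b set" f] by (simp add: o_def)

lemma M0_kills:
  fixes a :: "'i::finite \<Rightarrow> real"
  shows "M0 a *v (\<chi> k. case k of Inl i \<Rightarrow> x0 i | Inr i \<Rightarrow> x0 i) = 0"
proof -
  have "(M0 a *v (\<chi> k. case k of Inl i \<Rightarrow> x0 i | Inr i \<Rightarrow> x0 i)) $ k = 0" for k
  proof (cases k)
    case (Inl i)
    then show ?thesis
      by (simp add: matrix_vector_mult_def M0_def sum_UNIV_Plus if_distrib[of "\<lambda>z. z * _"] cong: if_cong)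
  next
    case (Inr i)
    then show ?thesis
      by (simp add: matrix_vector_mult_def M0_def sum_UNIV_Plus if_distrib[of "\<lambda>z. z * _"] cong: if_cong)
  qed
  then show ?thesis by (simp add: vec_eq_iff)
qed

lemma key_identity:
  fixes M P :: "complex^'n^'n"
  assumes Pw: "P *v (v + d) = 0" and Mv: "M *v v = 0"
  shows "((mat 1 - P) ** M ** (mat 1 - P) + P) *v v = ((mat 1 - P) ** M ** P - P) *v d"
proof -
  have Pv: "P *v v = - (P *v d)" using Pw by (simp add: matrix_vector_right_distrib eq_neg_iff_add_eq_0)
  have Qv: "(mat 1 - P) *v v = v + P *v d" using Pv by (simp add: matrix_vector_mult_diff_rdistrib)
  have "((mat 1 - P) ** M ** (mat 1 - P) + P) *v v = (mat 1 - P) *v (M *v ((mat 1 - P) *v v)) + P *v v"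
    by (simp add: matrix_vector_mult_add_rdistrib matrix_vector_mul_assoc matrix_mul_assoc)
  also have "\<dots> = (mat 1 - P) *v (M *v (P *v d)) - P *v d"
    using Qv Pv Mv by (simp add: matrix_vector_right_distrib)
  also have "\<dots> = ((mat 1 - P) ** M ** P - P) *v d"
    by (simp add: matrix_vector_mult_diff_rdistrib matrix_vector_mul_assoc matrix_mul_assoc)
  finally show ?thesis .
qed

lemma lin_alg:
  fixes a :: "'i::finite \<Rightarrow> real" and P :: "complex^('i+'i)^('i+'i)"
  assumes ker: "\<And>v. ((mat 1 - P) ** M0 a ** (mat 1 - P) + P) *v v = 0 \<Longrightarrow> v = 0"
  obtains K where "K > 0" "\<And>(x0::'i \<Rightarrow> complex) x1 i. P *v (\<chi> k. case k of Inl i \<Rightarrow> x0 i | Inr i \<Rightarrow> x1 i) = 0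
     \<Longrightarrow> norm (x0 i) \<le> K * (\<Sum>j\<in>UNIV. norm (x1 j - x0 j))"
proof -
  define A where "A = (mat 1 - P) ** M0 a ** (mat 1 - P) + P"
  define B where "B = (mat 1 - P) ** M0 a ** P - P"
  have lin: "linear ((*v) A)" by simp
  have inj: "inj ((*v) A)"
  proof (rule injI)
    fix x y assume "A *v x = A *v y"
    then have "A *v (x - y) = 0" by (simp add: matrix_vector_mult_diff_distrib)
    then show "x = y" using ker unfolding A_def by fastforce
  qed
  obtain B0 where B0: "B0 > 0" "\<And>x. B0 * norm x \<le> norm (A *v x)"
    using linear_inj_bounded_below_pos[OF lin inj] by blast
  obtain L where L: "L > 0" "\<And>x. norm (B *v x) \<le> norm x * L"
    using bounded_linear.pos_bounded[OF matrix_vector_mul_bounded_linear[of B]] by blast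
  show ?thesis
  proof (rule that[of "L / B0"])
    show "L / B0 > 0" using L B0 by simp
    fix x0 x1 :: "'i \<Rightarrow> complex" and i
    assume Pw: "P *v (\<chi> k. case k of Inl i \<Rightarrow> x0 i | Inr i \<Rightarrow> x1 i) = 0"
    define v :: "complex^('i+'i)" where "v = (\<chi> k. case k of Inl i \<Rightarrow> x0 i | Inr i \<Rightarrow> x0 i)"
    define d :: "complex^('i+'i)" where "d = (\<chi> k. case k of Inl i \<Rightarrow> 0 | Inr i \<Rightarrow> x1 i - x0 i)"
    have w: "(\<chi> k. case k of Inl i \<Rightarrow> x0 i | Inr i \<Rightarrow> x1 i) = v + d"
      by (simp add: vec_eq_iff v_def d_def split: sum.splits)
    have Av: "A *v v = B *v d"
      unfolding A_def B_def by (rule key_identity) (use Pw w M0_kills[of a x0] in \<open>simp_all add: v_def\<close>)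
    have nd: "norm d \<le> (\<Sum>j\<in>UNIV. norm (x1 j - x0 j))"
    proof -
      have "norm d \<le> (\<Sum>k\<in>UNIV. norm (d $ k))"
        unfolding norm_vec_def by (rule L2_set_le_sum) simp
      also have "\<dots> = (\<Sum>j\<in>UNIV. norm (x1 j - x0 j))"
        by (simp add: sum_UNIV_Plus d_def)
      finally show ?thesis .
    qed
    have "norm (v $ Inl i) \<le> norm v" by (rule Finite_Cartesian_Product.norm_nth_le)
    then have "norm (x0 i) \<le> norm v" by (simp add: v_def)
    also have "\<dots> \<le> norm (A *v v) / B0" using B0 by (simp add: field_simps)
    also have "\<dots> \<le> norm d * L / B0" using L(2)[of d] B0 Av by (simp add: divide_right_mono)
    also have "\<dots> \<le> (\<Sum>j\<in>UNIV. norm (x1 j - x0 j)) * L / B0"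
      using nd L B0 by (simp add: divide_right_mono mult_right_mono)
    finally show "norm (x0 i) \<le> L / B0 * (\<Sum>j\<in>UNIV. norm (x1 j - x0 j))" by (simp add: mult.commute)
  qed
qed

lemma L1_L2_bound:
  fixes g :: "real \<Rightarrow> complex"
  assumes a: "a > 0" and gi: "integrable (lebesgue_on {0..a}) (\<lambda>t. cmod (g t))"
    and sqi: "integrable (lebesgue_on {0..a}) (\<lambda>t. (cmod (g t))\<^sup>2)"
  shows "(integral\<^sup>L (lebesgue_on {0..a}) (\<lambda>t. cmod (g t)))\<^sup>2 \<le> a * integral\<^sup>L (lebesgue_on {0..a}) (\<lambda>t. (cmod (g t))\<^sup>2)"
proof -
  define m where "m = integral\<^sup>L (lebesgue_on {0..a}) (\<lambda>t. cmod (g t))"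
  define Q where "Q = integral\<^sup>L (lebesgue_on {0..a}) (\<lambda>t. (cmod (g t))\<^sup>2)"
  have m0: "m \<ge> 0" unfolding m_def by (rule integral_nonneg_AE) auto
  have Q0: "Q \<ge> 0" unfolding Q_def by (rule integral_nonneg_AE) auto
  show ?thesis
  proof (cases "m = 0")
    case True then show ?thesis using Q0 a by (simp add: m_def Q_def)
  next
    case False
    then have mp: "m > 0" using m0 by simp
    define s where "s = a / m"
    have sp: "s > 0" using a mp by (simp add: s_def)
    have pw: "cmod (g t) \<le> (s * (cmod (g t))\<^sup>2 + 1 / s) / 2" for t
    proof -
      have "0 \<le> (s * cmod (g t) - 1)\<^sup>2" by simp
      then have e1: "2 * (s * cmod (g t)) \<le> (s * cmod (g t))\<^sup>2 + 1"
        by (simp add: power2_diff)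
      have e2: "s * (s * (cmod (g t))\<^sup>2 + 1 / s) = (s * cmod (g t))\<^sup>2 + 1"
        using sp by (simp add: power2_eq_square field_simps)
      have "s * (2 * cmod (g t)) \<le> s * (s * (cmod (g t))\<^sup>2 + 1 / s)"
        using e1 e2 by (simp add: mult.left_commute)
      then have "2 * cmod (g t) \<le> s * (cmod (g t))\<^sup>2 + 1 / s"
        using sp by (simp only: mult_le_cancel_left_pos)
      then show ?thesis by (simp add: field_simps)
    qed
    interpret finite_measure "lebesgue_on {0..a}" by (rule finite_measure_lebesgue_on) simp
    have "m \<le> integral\<^sup>L (lebesgue_on {0..a}) (\<lambda>t. (s * (cmod (g t))\<^sup>2 + 1 / s) / 2)"
      unfolding m_def using gi sqi pw by (intro integral_mono) auto
    also have "\<dots> = (s * Q + a / s) / 2"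
      using sqi a by (simp add: Q_def integral_divide_zero measure_restrict_space)
    finally have "m \<le> (s * Q + a / s) / 2" .
    then have "m \<le> (a * Q / m + m) / 2" using a mp by (simp add: s_def)
    then have "m \<le> a * Q / m" by simp
    then have "m * m \<le> a * Q" using mp by (simp add: field_simps)
    then show ?thesis by (simp add: m_def Q_def power2_eq_square)
  qed
qed

theorem theorem4p2:
  fixes a :: "'i::finite \<Rightarrow> real"
    and P :: "complex ^ ('i + 'i) ^ ('i + 'i)"
  assumes a_pos: "\<And>i. a i > 0"
    and proj: "orth_projector P"
    and ker: "\<And>v. ((mat 1 - P) ** M0 a ** (mat 1 - P) + P) *v v = 0 \<Longrightarrow> v = 0"
  shows "\<exists>C>0. \<forall>u u'. (\<forall>i. edge_W (a i) (u i) (u' i)) \<and> P *v bdry a u = 0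
            \<longrightarrow> H_norm a u' \<ge> C * H_norm a u"
proof -
  obtain K where K: "K > 0" "\<And>(x0::'i \<Rightarrow> complex) x1 i. P *v (\<chi> k. case k of Inl i \<Rightarrow> x0 i | Inr i \<Rightarrow> x1 i) = 0
     \<Longrightarrow> norm (x0 i) \<le> K * (\<Sum>j\<in>UNIV. norm (x1 j - x0 j))"
    using lin_alg[OF ker] by blast
  define amax where "amax = (\<Sum>i\<in>UNIV. a i)"
  define n :: real where "n = real (card (UNIV :: 'i set))"
  have a_le: "a i \<le> amax" for i
    unfolding amax_def by (rule member_le_sum) (use a_pos in \<open>auto simp: less_imp_le\<close>)
  have amax_pos: "amax > 0" using a_le[of undefined] a_pos[of undefined] by linarith
  have n_pos: "n > 0" by (simp add: n_def)
  define Cst where "Cst = amax * (K + 1) * n"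
  have Cst_pos: "Cst > 0" using amax_pos K n_pos by (simp add: Cst_def)
  show ?thesis
  proof (intro exI[of _ "1 / Cst"] conjI allI impI)
    show "1 / Cst > 0" using Cst_pos by simp
    fix u u' :: "'i \<Rightarrow> real \<Rightarrow> complex"
    assume h: "(\<forall>i. edge_W (a i) (u i) (u' i)) \<and> P *v bdry a u = 0"
    then have W: "\<And>i. edge_W (a i) (u i) (u' i)" and Pb: "P *v bdry a u = 0" by auto
    define m where "m i = integral\<^sup>L (lebesgue_on {0..a i}) (\<lambda>t. cmod (u' i t))" for i
    define Q where "Q i = integral\<^sup>L (lebesgue_on {0..a i}) (\<lambda>t. (cmod (u' i t))\<^sup>2)" for i
    define D where "D = H_norm a u'"
    have L2: "L2_on {0..a i} (u' i)" for i using W[of i] by (simp add: edge_W_def)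
    have m0: "m i \<ge> 0" for i unfolding m_def by (rule integral_nonneg_AE) auto
    have Q0: "Q i \<ge> 0" for i unfolding Q_def by (rule integral_nonneg_AE) auto
    have D2: "D\<^sup>2 = (\<Sum>i\<in>UNIV. Q i)" and D0: "D \<ge> 0"
      using Q0 by (auto simp: D_def H_norm_def Q_def sum_nonneg)
    have mQ: "(m i)\<^sup>2 \<le> a i * Q i" for i
      unfolding m_def Q_def using L2_integrable[OF L2[of i]] a_pos[of i] by (intro L1_L2_bound) auto
    have mb: "m i \<le> sqrt amax * D" for i
    proof -
      have "Q i \<le> D\<^sup>2" unfolding D2 by (rule member_le_sum) (use Q0 in auto)
      then have "a i * Q i \<le> amax * D\<^sup>2" using a_le[of i] Q0[of i] amax_pos
        by (intro mult_mono) auto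
      then have "(m i)\<^sup>2 \<le> amax * D\<^sup>2" using mQ[of i] by linarith
      then have "m i \<le> sqrt (amax * D\<^sup>2)" by (rule real_le_rsqrt)
      then show ?thesis using D0 by (simp add: real_sqrt_mult)
    qed
    define Msum where "Msum = (\<Sum>j\<in>UNIV. m j)"
    have Msb: "Msum \<le> n * (sqrt amax * D)"
      unfolding Msum_def n_def by (rule sum_bounded_above) (use mb in auto)
    have mMs: "m i \<le> Msum" for i unfolding Msum_def by (rule member_le_sum) (use m0 in auto)
    have bd: "\<And>i. bdry a u = (\<chi> k. case k of Inl i \<Rightarrow> u i 0 | Inr i \<Rightarrow> u i (a i))"
      by (simp add: bdry_def)
    have u0: "norm (u i 0) \<le> K * Msum" for i
    proof -
      have "norm (u i 0) \<le> K * (\<Sum>j\<in>UNIV. norm (u j (a j) - u j 0))"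
        using K(2)[of "\<lambda>i. u i 0" "\<lambda>i. u i (a i)" i] Pb by (simp add: bdry_def)
      also have "\<dots> \<le> K * Msum"
      proof (rule mult_left_mono)
        show "(\<Sum>j\<in>UNIV. norm (u j (a j) - u j 0)) \<le> Msum"
          unfolding Msum_def m_def
        proof (rule sum_mono)
          fix j :: 'i
          have "a j \<in> {0..a j}" using a_pos[of j] by simp
          then show "norm (u j (a j) - u j 0) \<le> integral\<^sup>L (lebesgue_on {0..a j}) (\<lambda>t. cmod (u' j t))"
            by (rule edge_bound[OF W])
        qed
      qed (use K(1) in simp)
      finally show ?thesis .
    qed
    define B where "B = (K + 1) * (n * (sqrt amax * D))"
    have B0: "B \<ge> 0" using K n_pos D0 amax_pos by (simp add: B_def)
    have ub: "cmod (u i x) \<le> B" if x: "x \<in> {0..a i}" for i x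
    proof -
      have "cmod (u i x) \<le> cmod (u i 0) + cmod (u i x - u i 0)" by (rule norm_triangle_sub)
      also have "\<dots> \<le> K * Msum + m i" using u0[of i] edge_bound[OF W x] by (simp add: m_def)
      also have "\<dots> \<le> (K + 1) * Msum" using mMs[of i] by (simp add: algebra_simps)
      also have "\<dots> \<le> B" unfolding B_def using Msb K by (intro mult_left_mono) auto
      finally show ?thesis .
    qed
    have ib: "integral\<^sup>L (lebesgue_on {0..a i}) (\<lambda>x. (cmod (u i x))\<^sup>2) \<le> a i * B\<^sup>2" for i
    proof (cases "integrable (lebesgue_on {0..a i}) (\<lambda>x. (cmod (u i x))\<^sup>2)")
      case True
      interpret finite_measure "lebesgue_on {0..a i}" by (rule finite_measure_lebesgue_on) simp
      have "integral\<^sup>L (lebesgue_on {0..a i}) (\<lambda>x. (cmod (u i x))\<^sup>2) \<le> integral\<^sup>L (lebesgue_on {0..a i}) (\<lambda>x. B\<^sup>2)"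
      proof (rule integral_mono[OF True])
        show "integrable (lebesgue_on {0..a i}) (\<lambda>x. B\<^sup>2)" by simp
        fix x assume "x \<in> space (lebesgue_on {0..a i})"
        then have "x \<in> {0..a i}" by simp
        then show "(cmod (u i x))\<^sup>2 \<le> B\<^sup>2" using ub by (intro power_mono) auto
      qed
      also have "\<dots> = a i * B\<^sup>2" using a_pos[of i] by (simp add: measure_restrict_space)
      finally show ?thesis .
    next
      case False
      then show ?thesis using a_pos[of i] by (simp add: not_integrable_integral_eq)
    qed
    have "H_norm a u \<le> sqrt (\<Sum>i\<in>UNIV. a i * B\<^sup>2)"
      unfolding H_norm_def using ib by (intro real_sqrt_le_mono sum_mono)
    also have "\<dots> = sqrt (amax * B\<^sup>2)" by (simp add: amax_def sum_distrib_right)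
    also have "\<dots> = sqrt amax * B" using B0 amax_pos by (simp add: real_sqrt_mult)
    also have "\<dots> = Cst * D"
      using amax_pos by (simp add: B_def Cst_def algebra_simps)
    finally have "H_norm a u \<le> Cst * D" .
    then show "1 / Cst * H_norm a u \<le> H_norm a u'"
      using Cst_pos by (simp add: D_def field_simps)
  qed
qed

end
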